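(* Every weak factorization structure is a factorization structure.
   Context: Let $\mathbb{F}=\mathbb{R}$ or $\mathbb{C}$, $V_1,\ldots,V_m$ ($m\ge2$) 2-dimensional $\mathbb{F}$-vector spaces, $V^*=V_1^*\otimes\cdots\otimes V_m^*$. For $\ell\in\mathbb{P}(V_j)$ (the set of 1-dimensional subspaces, with Zariski topology) let $\Sigma^0_{j,\ell}=V_1^*\otimes\cdots\otimes V_{j-1}^*\otimes\ell^0\otimes V_{j+1}^*\otimes\cdots\otimes V_m^*$, where $\ell^0\subset V_j^*$ is the annihilator of $\ell$. "Generic $\ell$" means all $\ell$ in some nonempty Zariski-open subset. A weak factorization structure of dimension $m$ is an injective linear map $\varphi:\mathfrak{h}\to V^*$ with $\dim\mathfrak{h}=m+1$ such that $\dim(\varphi(\mathfrak{h})\cap\Sigma^0_{j,\ell})\ge1$ for every $j$ and generic $\ell\in\mathbb{P}(V_j)$. A factorization structure is such a map with $\dim(\varphi(\mathfrak{h})\cap\Sigma^0_{j,\ell})=1$ for every $j$ and generic $\ell\in\mathbb{P}(V_j)$. *)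

theory Defs
  imports "HOL-Analysis.Analysis" "HOL-Library.Function_Algebras"
begin

(* Conventions:
   - The ground field F is a type 'a :: real_normed_field (i.e. R or C).
   - V_j = F^2 represented as 'a \<times> 'a; V_j^* = F^2 as well, with pairing
     <(a,b),(x,y)> = a*x + b*y.
   - V^* = V_1^* \<otimes> ... \<otimes> V_m^* is modelled as functions T :: (nat \<Rightarrow> nat) \<Rightarrow> 'a
     on multi-indices f with f i \<in> {0,1} for i < m and f i = 0 for i \<ge> m,
     vanishing outside these multi-indices. Slots are indexed 0..m-1.
   - h = F^(m+1), modelled as functions nat \<Rightarrow> 'a vanishing at indices \<ge> m+1. *)

definition idx :: "nat \<Rightarrow> (nat \<Rightarrow> nat) set" where
  "idx m = {f. (\<forall>i<m. f i < 2) \<and> (\<forall>i\<ge>m. f i = 0)}"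

definition tensors :: "nat \<Rightarrow> ((nat \<Rightarrow> nat) \<Rightarrow> 'a::field) set" where
  "tensors m = {T. \<forall>f. f \<notin> idx m \<longrightarrow> T f = 0}"

definition tscale :: "'a::field \<Rightarrow> ('b \<Rightarrow> 'a) \<Rightarrow> ('b \<Rightarrow> 'a)" where
  "tscale c T = (\<lambda>f. c * T f)"

definition comp2 :: "'a \<times> 'a \<Rightarrow> nat \<Rightarrow> 'a" where
  "comp2 p k = (if k = 0 then fst p else snd p)"

definition pure :: "nat \<Rightarrow> (nat \<Rightarrow> 'a \<times> 'a) \<Rightarrow> (nat \<Rightarrow> nat) \<Rightarrow> 'a::field" where
  "pure m \<alpha> = (\<lambda>f. if f \<in> idx m then (\<Prod>i<m. comp2 (\<alpha> i) (f i)) else 0)"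

definition P1 :: "('a::field \<times> 'a) set set" where
  "P1 = {L. \<exists>v. v \<noteq> (0, 0) \<and> L = {(c * fst v, c * snd v) | c. True}}"

definition hom_eval :: "'a::field list \<Rightarrow> 'a \<times> 'a \<Rightarrow> 'a" where
  "hom_eval cs v = (\<Sum>k<length cs. cs ! k * fst v ^ k * snd v ^ (length cs - 1 - k))"

definition zariski_closed_P1 :: "('a::field \<times> 'a) set set \<Rightarrow> bool" where
  "zariski_closed_P1 Z \<longleftrightarrow> Z \<subseteq> P1 \<and>
     (\<exists>S. Z = {L \<in> P1. \<forall>cs\<in>S. \<forall>v\<in>L. hom_eval cs v = 0})"

definition generic :: "(('a::field \<times> 'a) set \<Rightarrow> bool) \<Rightarrow> bool" where
  "generic P \<longleftrightarrow> (\<exists>U. U \<subseteq> P1 \<and> U \<noteq> {} \<and> zariski_closed_P1 (P1 - U) \<and> (\<forall>L\<in>U. P L))"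

definition annih :: "('a::field \<times> 'a) set \<Rightarrow> ('a \<times> 'a) set" where
  "annih L = {\<alpha>. \<forall>v\<in>L. fst \<alpha> * fst v + snd \<alpha> * snd v = 0}"

text \<open>Sigma^0_{j,L} = V_1^* \<otimes> ... \<otimes> L^0 \<otimes> ... \<otimes> V_m^* (L^0 in slot j), as the span
  of pure tensors whose j-th factor lies in L^0.\<close>
definition Sigma0 :: "nat \<Rightarrow> nat \<Rightarrow> ('a::field \<times> 'a) set \<Rightarrow> ((nat \<Rightarrow> nat) \<Rightarrow> 'a) set" where
  "Sigma0 m j L = module.span tscale {pure m \<alpha> | \<alpha>. \<alpha> j \<in> annih L}"

definition hspace :: "nat \<Rightarrow> (nat \<Rightarrow> 'a::field) set" where
  "hspace m = {x. \<forall>i\<ge>m + 1. x i = 0}"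

definition inj_lin_map :: "nat \<Rightarrow> ((nat \<Rightarrow> 'a::field) \<Rightarrow> (nat \<Rightarrow> nat) \<Rightarrow> 'a) \<Rightarrow> bool" where
  "inj_lin_map m \<phi> \<longleftrightarrow>
     (\<forall>x\<in>hspace m. \<phi> x \<in> tensors m) \<and>
     (\<forall>x\<in>hspace m. \<forall>y\<in>hspace m. \<phi> (x + y) = \<phi> x + \<phi> y) \<and>
     (\<forall>c. \<forall>x\<in>hspace m. \<phi> (tscale c x) = tscale c (\<phi> x)) \<and>
     inj_on \<phi> (hspace m)"

definition weak_factorization_structure ::
  "nat \<Rightarrow> ((nat \<Rightarrow> 'a::field) \<Rightarrow> (nat \<Rightarrow> nat) \<Rightarrow> 'a) \<Rightarrow> bool" where
  "weak_factorization_structure m \<phi> \<longleftrightarrow> inj_lin_map m \<phi> \<and>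
     (\<forall>j<m. generic (\<lambda>L. vector_space.dim tscale (\<phi> ` hspace m \<inter> Sigma0 m j L) \<ge> 1))"

definition factorization_structure ::
  "nat \<Rightarrow> ((nat \<Rightarrow> 'a::field) \<Rightarrow> (nat \<Rightarrow> nat) \<Rightarrow> 'a) \<Rightarrow> bool" where
  "factorization_structure m \<phi> \<longleftrightarrow> inj_lin_map m \<phi> \<and>
     (\<forall>j<m. generic (\<lambda>L. vector_space.dim tscale (\<phi> ` hspace m \<inter> Sigma0 m j L) = 1))"

end

theory Submission
  imports Defs "HOL-Computational_Algebra.Polynomial"
begin


lemma vs_tscale: "vector_space (tscale :: 'a::field \<Rightarrow> ('b \<Rightarrow> 'a) \<Rightarrow> ('b \<Rightarrow> 'a))"
  by unfold_locales (auto simp: tscale_def fun_eq_iff algebra_simps)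

interpretation TS: vector_space "tscale :: 'a::field \<Rightarrow> ('b \<Rightarrow> 'a) \<Rightarrow> ('b \<Rightarrow> 'a)"
  by (rule vs_tscale)

definition idxS :: "nat set \<Rightarrow> (nat \<Rightarrow> nat) set" where
  "idxS S = {f. (\<forall>i\<in>S. f i < 2) \<and> (\<forall>i. i \<notin> S \<longrightarrow> f i = 0)}"

definition tensS :: "nat set \<Rightarrow> ((nat \<Rightarrow> nat) \<Rightarrow> 'a::field) set" where
  "tensS S = {T. \<forall>f. f \<notin> idxS S \<longrightarrow> T f = 0}"

definition contr :: "nat \<Rightarrow> 'a::field \<times> 'a \<Rightarrow> ((nat \<Rightarrow> nat) \<Rightarrow> 'a) \<Rightarrow> ((nat \<Rightarrow> nat) \<Rightarrow> 'a)" where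
  "contr j v T = (\<lambda>f. if f j = 0 then fst v * T (f(j:=0)) + snd v * T (f(j:=1)) else 0)"

definition indep2 :: "'a::field \<times> 'a \<Rightarrow> 'a \<times> 'a \<Rightarrow> bool" where
  "indep2 v w \<longleftrightarrow> fst v * snd w \<noteq> snd v * fst w"

definition lineset :: "('a::field \<times> 'a) set \<Rightarrow> bool" where
  "lineset A \<longleftrightarrow> (\<forall>v\<in>A. \<forall>w\<in>A. v \<noteq> w \<longrightarrow> indep2 v w)"

definition good :: "((nat \<Rightarrow> nat) \<Rightarrow> 'a::field) set \<Rightarrow> nat \<Rightarrow> 'a \<times> 'a \<Rightarrow> bool" where
  "good H j v \<longleftrightarrow> (\<exists>T\<in>H. T \<noteq> 0 \<and> contr j v T = 0)"

lemma lineset_subset: "lineset A \<Longrightarrow> B \<subseteq> A \<Longrightarrow> lineset B"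
  unfolding lineset_def by blast

lemma contr_linear: "Vector_Spaces.linear tscale tscale (contr j v)"
  apply (rule Vector_Spaces.linear_iff[THEN iffD2])
  apply (simp add: vs_tscale)
  apply (simp add: contr_def tscale_def fun_eq_iff algebra_simps plus_fun_def)
  done

lemma contr_zero[simp]: "contr j v 0 = 0"
  by (auto simp: contr_def fun_eq_iff)

lemma contr_comm:
  assumes "i \<noteq> j"
  shows "contr i s (contr j v T) = contr j v (contr i s T)"
proof
  fix f :: "nat \<Rightarrow> nat"
  have t: "f(j:=0, i:=0) = f(i:=0, j:=0)" "f(j:=0, i:=Suc 0) = f(i:=Suc 0, j:=0)"
     "f(j:=Suc 0, i:=0) = f(i:=0, j:=Suc 0)" "f(j:=Suc 0, i:=Suc 0) = f(i:=Suc 0, j:=Suc 0)"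
    using assms by (simp_all add: fun_upd_twist)
  show "contr i s (contr j v T) f = contr j v (contr i s T) f"
    using assms unfolding contr_def by (simp add: t algebra_simps)
qed

lemma contr_tensS:
  assumes "T \<in> tensS S"
  shows "contr j v T \<in> tensS (S - {j})"
proof -
  { fix f assume f: "f \<notin> idxS (S - {j})" and fj: "f j = 0"
    have "f(j:=k) \<notin> idxS S" if "k < 2" for k::nat
    proof
      assume "f(j:=k) \<in> idxS S"
      hence A: "\<forall>i\<in>S. (f(j:=k)) i < 2" "\<forall>i. i \<notin> S \<longrightarrow> (f(j:=k)) i = 0"
        unfolding idxS_def by auto
      have "f \<in> idxS (S - {j})" unfolding idxS_def
      proof (intro CollectI conjI allI ballI impI)
        fix i assume i: "i \<in> S - {j}"
        hence "i \<noteq> j" "i \<in> S" by auto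
        thus "f i < 2" using A(1) by auto
      next
        fix i assume i: "i \<notin> S - {j}"
        show "f i = 0"
        proof (cases "i = j")
          case True thus ?thesis using fj by simp
        next
          case False thus ?thesis using i A(2)[rule_format, of i] by auto
        qed
      qed
      thus False using f by blast
    qed
    hence "T (f(j:=0)) = 0" "T (f(j:=1)) = 0" using assms unfolding tensS_def by auto }
  thus ?thesis unfolding tensS_def contr_def by auto
qed

lemma kill2:
  assumes T: "T \<in> tensS S" and j: "j \<in> S" and ind: "indep2 v w"
    and cv: "contr j v T = 0" and cw: "contr j w T = 0"
  shows "T = 0"
proof
  fix f
  show "T f = 0 f"
  proof (cases "f \<in> idxS S")
    case False thus ?thesis using T by (auto simp: tensS_def)
  next
    case True
    hence fj: "f j < 2" using j by (auto simp: idxS_def)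
    let ?g = "f(j:=0)"
    have e1: "fst v * T (f(j:=0)) + snd v * T (f(j:=1)) = 0"
      using fun_cong[OF cv, of ?g] by (simp add: contr_def)
    have e2: "fst w * T (f(j:=0)) + snd w * T (f(j:=1)) = 0"
      using fun_cong[OF cw, of ?g] by (simp add: contr_def)
    have d: "fst v * snd w - snd v * fst w \<noteq> 0" using ind by (simp add: indep2_def)
    have a: "T (f(j:=0)) * (fst v * snd w - snd v * fst w) = 0"
    proof -
      have "T (f(j:=0)) * (fst v * snd w - snd v * fst w)
          = snd w * (fst v * T (f(j:=0)) + snd v * T (f(j:=1)))
            - snd v * (fst w * T (f(j:=0)) + snd w * T (f(j:=1)))"
        by (simp add: algebra_simps)
      thus ?thesis using e1 e2 by simp
    qed
    have b: "T (f(j:=1)) * (fst v * snd w - snd v * fst w) = 0"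
    proof -
      have "T (f(j:=1)) * (fst v * snd w - snd v * fst w)
          = fst v * (fst w * T (f(j:=0)) + snd w * T (f(j:=1)))
            - fst w * (fst v * T (f(j:=0)) + snd v * T (f(j:=1)))"
        by (simp add: algebra_simps)
      thus ?thesis using e1 e2 by simp
    qed
    have "f j = 0 \<or> f j = 1" using fj by linarith
    hence "f = f(j:=0) \<or> f = f(j:=1)" by (metis fun_upd_triv)
    thus ?thesis using a b d by auto
  qed
qed



lemma combine:
  fixes f :: "('b \<Rightarrow> 'a::field) \<Rightarrow> ('b \<Rightarrow> 'a)"
  assumes lin: "Vector_Spaces.linear tscale tscale f"
    and B1: "B' \<subseteq> f ` H" and B2: "TS.independent B'" and B3: "finite B'"
    and K1: "K \<subseteq> H" and K2: "TS.independent K" and K3: "finite K"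
    and K4: "\<forall>x\<in>K. f x = 0"
  shows "\<exists>A\<subseteq>H. TS.independent A \<and> card A = card B' + card K"
proof -
  interpret lf: Vector_Spaces.linear tscale tscale f by (rule lin)
  have "\<forall>b\<in>B'. \<exists>y. y \<in> H \<and> f y = b" using B1 by blast
  from bchoice[OF this] obtain g where g0: "\<forall>b\<in>B'. g b \<in> H \<and> f (g b) = b" by blast
  have g: "g b \<in> H" "f (g b) = b" if "b \<in> B'" for b using g0 that by auto
  have inj: "inj_on g B'"
  proof (rule inj_onI)
    fix x y assume "x \<in> B'" "y \<in> B'" "g x = g y"
    thus "x = y" using g(2) by metis
  qed
  have nz: "0 \<notin> B'" using B2 TS.dependent_zero by blast
  have disj: "g ` B' \<inter> K = {}"
  proof (rule ccontr)
    assume "g ` B' \<inter> K \<noteq> {}"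
    then obtain b where "b \<in> B'" "g b \<in> K" by blast
    hence "b = 0" using g(2)[of b] K4 by simp
    thus False using nz \<open>b \<in> B'\<close> by blast
  qed
  define A where "A = g ` B' \<union> K"
  have finA: "finite A" using B3 K3 by (simp add: A_def)
  have cardA: "card A = card B' + card K"
    unfolding A_def using card_Un_disjoint[OF finite_imageI[OF B3] K3 disj] card_image[OF inj] by simp
  have AH: "A \<subseteq> H" using g K1 by (auto simp: A_def)
  have indA: "TS.independent A"
  proof (rule TS.independent_if_scalars_zero[OF finA])
    fix c x assume sum0: "(\<Sum>y\<in>A. tscale (c y) y) = 0" and xA: "x \<in> A"
    have split: "(\<Sum>y\<in>A. tscale (c y) y) = (\<Sum>y\<in>g ` B'. tscale (c y) y) + (\<Sum>y\<in>K. tscale (c y) y)"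
      unfolding A_def by (rule sum.union_disjoint[OF finite_imageI[OF B3] K3 disj])
    have "f (\<Sum>y\<in>A. tscale (c y) y) = (\<Sum>y\<in>A. tscale (c y) (f y))"
      by (simp add: lf.sum lf.scale)
    also have "\<dots> = (\<Sum>y\<in>g ` B'. tscale (c y) (f y)) + (\<Sum>y\<in>K. tscale (c y) (f y))"
      unfolding A_def by (rule sum.union_disjoint[OF finite_imageI[OF B3] K3 disj])
    also have "(\<Sum>y\<in>K. tscale (c y) (f y)) = 0"
      using K4 by (intro sum.neutral) (simp add: tscale_def fun_eq_iff)
    also have "(\<Sum>y\<in>g ` B'. tscale (c y) (f y)) = (\<Sum>b\<in>B'. tscale (c (g b)) b)"
      by (simp add: sum.reindex[OF inj] g)
    finally have eq: "f (\<Sum>y\<in>A. tscale (c y) y) = (\<Sum>b\<in>B'. tscale (c (g b)) b)" by simp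
    have "(\<Sum>b\<in>B'. tscale (c (g b)) b) = f (\<Sum>y\<in>A. tscale (c y) y)" using eq by simp
    also have "\<dots> = f 0" by (simp only: sum0)
    also have "\<dots> = 0" by (rule lf.zero)
    finally have "(\<Sum>b\<in>B'. tscale (c (g b)) b) = 0" .
    hence cB: "\<forall>b\<in>B'. c (g b) = 0"
      using TS.independent_explicit_finite_subsets[THEN iffD1, rule_format, OF B2 subset_refl B3, of "\<lambda>b. c (g b)"]
      by blast
    have "(\<Sum>y\<in>g ` B'. tscale (c y) y) = 0"
    proof (rule sum.neutral, rule ballI)
      fix y assume "y \<in> g ` B'"
      then obtain b where "b \<in> B'" "y = g b" by blast
      hence "c y = 0" using cB by simp
      thus "tscale (c y) y = 0" by (simp add: tscale_def fun_eq_iff)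
    qed
    hence sK: "(\<Sum>y\<in>K. tscale (c y) y) = 0" using sum0 split by simp
    show "c x = 0"
    proof (cases "x \<in> K")
      case True thus ?thesis
        using TS.independent_explicit_finite_subsets[THEN iffD1, rule_format, OF K2 subset_refl K3, of c] sK by blast
    next
      case False
      then obtain b where "b \<in> B'" "x = g b" using xA by (auto simp: A_def)
      thus ?thesis using cB by simp
    qed
  qed
  show ?thesis using AH indA cardA by blast
qed


lemma pigeon:
  assumes finP: "finite P" and finC: "finite C" and ne: "C \<noteq> {}"
    and card: "card P \<le> k * card C"
    and uniq: "\<forall>p\<in>P. \<forall>v1\<in>C. \<forall>v2\<in>C. bad p v1 \<longrightarrow> bad p v2 \<longrightarrow> v1 = v2"
  shows "\<exists>v\<in>C. card {p\<in>P. bad p v} \<le> k"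
proof (rule ccontr)
  assume "\<not> ?thesis"
  hence big: "\<forall>v\<in>C. Suc k \<le> card {p\<in>P. bad p v}" by auto
  have dis: "\<forall>v1\<in>C. \<forall>v2\<in>C. v1 \<noteq> v2 \<longrightarrow> {p\<in>P. bad p v1} \<inter> {p\<in>P. bad p v2} = {}"
    using uniq by blast
  have fin: "\<forall>v\<in>C. finite {p\<in>P. bad p v}" using finP by simp
  have e1: "card (\<Union>v\<in>C. {p\<in>P. bad p v}) = (\<Sum>v\<in>C. card {p\<in>P. bad p v})"
    by (rule card_UN_disjoint[OF finC fin dis])
  have e2: "card (\<Union>v\<in>C. {p\<in>P. bad p v}) \<le> card P"
    by (rule card_mono[OF finP]) blast
  have e3: "(\<Sum>v\<in>C. Suc k) \<le> (\<Sum>v\<in>C. card {p\<in>P. bad p v})"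
    by (rule sum_mono) (use big in blast)
  have e4: "card C > 0" using finC ne by (simp add: card_gt_0_iff)
  have e5: "(\<Sum>v\<in>C. Suc k) = card C * Suc k" by simp
  have "card C * Suc k \<le> k * card C" using e1 e2 e3 e5 card by linarith
  thus False using e4 by simp
qed


lemma step:
  fixes H :: "((nat \<Rightarrow> nat) \<Rightarrow> 'a::field) set"
  assumes HS: "H \<subseteq> tensS S" and j: "j \<in> S" and finS: "finite S"
    and A: "\<forall>i\<in>S - {j}. lineset (A i) \<and> card (A i) = N + card (S - {j}) \<and> (\<forall>s\<in>A i. good H i s)"
    and C1: "lineset C" and C2: "card C = N + card (S - {j})" and N: "N > 0"
  shows "\<exists>v\<in>C. \<forall>i\<in>S - {j}. \<exists>A'. A' \<subseteq> A i \<and> lineset A' \<and> card A' = N \<and>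
             (\<forall>s\<in>A'. good (contr j v ` H) i s)"
proof -
  define S' where "S' = S - {j}"
  define k where "k = card S'"
  define P where "P = Sigma S' A"
  have "\<forall>p\<in>P. \<exists>T. T \<in> H \<and> T \<noteq> 0 \<and> contr (fst p) (snd p) T = 0"
    using A unfolding P_def S'_def good_def by auto
  from bchoice[OF this] obtain Tp where Tp: "\<forall>p\<in>P. Tp p \<in> H \<and> Tp p \<noteq> 0 \<and> contr (fst p) (snd p) (Tp p) = 0"
    by blast
  define bad where "bad p v \<longleftrightarrow> contr j v (Tp p) = 0" for p v
  have finS': "finite S'" using finS by (simp add: S'_def)
  have finA: "\<forall>i\<in>S'. finite (A i)"
  proof
    fix i assume "i \<in> S'"
    hence "card (A i) = N + card (S - {j})" using A unfolding S'_def by blast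
    hence "card (A i) > 0" using N by simp
    thus "finite (A i)" by (simp add: card_gt_0_iff)
  qed
  have finP: "finite P" unfolding P_def using finS' finA by auto
  have cardP: "card P = k * card C"
  proof -
    have "card P = (\<Sum>i\<in>S'. card (A i))" unfolding P_def using finS' finA by simp
    also have "\<dots> = (\<Sum>i\<in>S'. N + k)" using A unfolding S'_def k_def by simp
    finally show ?thesis using C2 unfolding k_def S'_def by simp
  qed
  have "card C > 0" using C2 N by simp
  hence finC: "finite C" by (simp add: card_gt_0_iff)
  have neC: "C \<noteq> {}" using C2 N by auto
  have uniq: "\<forall>p\<in>P. \<forall>v1\<in>C. \<forall>v2\<in>C. bad p v1 \<longrightarrow> bad p v2 \<longrightarrow> v1 = v2"
  proof (intro ballI impI)
    fix p v1 v2 assume p: "p \<in> P" and v: "v1 \<in> C" "v2 \<in> C" and b: "bad p v1" "bad p v2"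
    show "v1 = v2"
    proof (rule ccontr)
      assume "v1 \<noteq> v2"
      hence "indep2 v1 v2" using C1 v unfolding lineset_def by blast
      moreover have "Tp p \<in> tensS S" using Tp p HS by blast
      ultimately have "Tp p = 0" using kill2[OF _ j] b unfolding bad_def by blast
      thus False using Tp p by blast
    qed
  qed
  obtain v where v: "v \<in> C" and vk: "card {p\<in>P. bad p v} \<le> k"
    using pigeon[OF finP finC neC _ uniq, of k] cardP by auto
  have "\<forall>i\<in>S'. \<exists>A'. A' \<subseteq> A i \<and> lineset A' \<and> card A' = N \<and> (\<forall>s\<in>A'. good (contr j v ` H) i s)"
  proof
    fix i assume i: "i \<in> S'"
    define G where "G = {s\<in>A i. \<not> bad (i,s) v}"
    define Bd where "Bd = {s\<in>A i. bad (i,s) v}"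
    have finAi: "finite (A i)" using finA i by blast
    have "Pair i ` Bd \<subseteq> {p\<in>P. bad p v}" unfolding Bd_def P_def using i by auto
    hence "card (Pair i ` Bd) \<le> card {p\<in>P. bad p v}" using finP by (intro card_mono) auto
    moreover have "card (Pair i ` Bd) = card Bd" by (rule card_image) (simp add: inj_on_def)
    ultimately have cBd: "card Bd \<le> k" using vk by simp
    have "A i = G \<union> Bd" "G \<inter> Bd = {}" unfolding G_def Bd_def by auto
    hence "card (A i) = card G + card Bd" using finAi
      by (simp add: card_Un_disjoint)
    moreover have "card (A i) = N + k" using A i unfolding S'_def k_def by blast
    ultimately have "N \<le> card G" using cBd by linarith
    then obtain A' where A': "A' \<subseteq> G" "card A' = N" by (meson obtain_subset_with_card_n)
    have ij: "i \<noteq> j" using i unfolding S'_def by blast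
    have "\<forall>s\<in>A'. good (contr j v ` H) i s"
    proof
      fix s assume s: "s \<in> A'"
      hence sA: "s \<in> A i" "\<not> bad (i,s) v" using A' unfolding G_def by auto
      hence p: "(i,s) \<in> P" using i unfolding P_def by auto
      have "contr j v (Tp (i,s)) \<in> contr j v ` H" using Tp p by blast
      moreover have "contr j v (Tp (i,s)) \<noteq> 0" using sA unfolding bad_def by blast
      moreover have "contr i s (contr j v (Tp (i,s))) = 0"
      proof -
        have "contr i s (Tp (i,s)) = 0" using Tp p by fastforce
        thus ?thesis by (simp add: contr_comm[OF ij])
      qed
      ultimately show "good (contr j v ` H) i s" unfolding good_def by blast
    qed
    moreover have "lineset A'"
    proof (rule lineset_subset)
      show "lineset (A i)" using A i unfolding S'_def by blast
      show "A' \<subseteq> A i" using A' unfolding G_def by blast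
    qed
    ultimately show "\<exists>A'. A' \<subseteq> A i \<and> lineset A' \<and> card A' = N \<and> (\<forall>s\<in>A'. good (contr j v ` H) i s)"
      using A' unfolding G_def by blast
  qed
  thus ?thesis using v unfolding S'_def by blast
qed



lemma subset_good:
  assumes "lineset A" "card A = M" "\<forall>v\<in>A. good H j v" "N \<le> M"
  shows "\<exists>A'. lineset A' \<and> card A' = N \<and> (\<forall>v\<in>A'. good H j v)"
proof -
  have "N \<le> card A" using assms(2,4) by simp
  then obtain A' where A': "A' \<subseteq> A" "card A' = N" by (rule obtain_subset_with_card_n)
  have "lineset A'" using lineset_subset[OF assms(1) A'(1)] .
  moreover have "\<forall>v\<in>A'. good H j v" using assms(3) A'(1) by blast
  ultimately show ?thesis using A'(2) by blast
qed

lemma key: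
  "\<forall>S (H :: ((nat \<Rightarrow> nat) \<Rightarrow> 'a::field) set). finite S \<longrightarrow> card S = Suc n \<longrightarrow> H \<subseteq> tensS S \<longrightarrow>
    (\<forall>j\<in>S. \<exists>A. lineset A \<and> card A = Suc n * Suc n + 1 \<and> (\<forall>v\<in>A. good H j v)) \<longrightarrow>
    (\<exists>B\<subseteq>H. TS.independent B \<and> card B = Suc n + 1)"
proof (induction n)
  case 0
  show ?case
  proof (intro allI impI)
    fix S and H :: "((nat \<Rightarrow> nat) \<Rightarrow> 'a::field) set"
    assume finS: "finite S" and cS: "card S = Suc 0" and HS: "H \<subseteq> tensS S"
      and hyp: "\<forall>j\<in>S. \<exists>A. lineset A \<and> card A = Suc 0 * Suc 0 + 1 \<and> (\<forall>v\<in>A. good H j v)"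
    obtain j where Sj: "S = {j}" using card_1_singleton_iff[THEN iffD1, OF cS] by blast
    hence j: "j \<in> S" by simp
    obtain A where A: "lineset A" "card A = 2" "\<forall>v\<in>A. good H j v" using hyp j by auto
    obtain v w where vw: "A = {v, w}" "v \<noteq> w" using card_2_iff[THEN iffD1, OF A(2)] by blast
    have vA: "v \<in> A" "w \<in> A" using vw(1) by simp_all
    have ind: "indep2 w v" using A(1) vA vw(2) unfolding lineset_def by metis
    obtain T1 where T1: "T1 \<in> H" "T1 \<noteq> 0" "contr j v T1 = 0" using A(3) vA(1) unfolding good_def by blast
    obtain T2 where T2: "T2 \<in> H" "T2 \<noteq> 0" "contr j w T2 = 0" using A(3) vA(2) unfolding good_def by blast
    have "contr j v T2 \<noteq> 0"
    proof
      assume "contr j v T2 = 0"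
      moreover have "T2 \<in> tensS S" using T2(1) HS by blast
      ultimately have "T2 = 0" using kill2[OF _ j ind T2(3)] by blast
      thus False using T2 by blast
    qed
    hence i1: "TS.independent {contr j v T2}" using TS.dependent_single by blast
    have i2: "TS.independent {T1}" using T1(2) TS.dependent_single by blast
    have s1: "{contr j v T2} \<subseteq> contr j v ` H" using T2(1) by blast
    have s2: "{T1} \<subseteq> H" using T1(1) by blast
    have s3: "\<forall>x\<in>{T1}. contr j v x = 0" using T1(3) by blast
    have "\<exists>B\<subseteq>H. TS.independent B \<and> card B = card {contr j v T2} + card {T1}"
      by (rule combine[OF contr_linear s1 i1 finite.insertI[OF finite.emptyI] s2 i2 finite.insertI[OF finite.emptyI] s3])
    thus "\<exists>B\<subseteq>H. TS.independent B \<and> card B = Suc 0 + 1" by simp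
  qed
next
  case (Suc n)
  show ?case
  proof (intro allI impI)
    fix S and H :: "((nat \<Rightarrow> nat) \<Rightarrow> 'a::field) set"
    assume finS: "finite S" and cS: "card S = Suc (Suc n)" and HS: "H \<subseteq> tensS S"
      and hyp: "\<forall>j\<in>S. \<exists>A. lineset A \<and> card A = Suc (Suc n) * Suc (Suc n) + 1 \<and> (\<forall>v\<in>A. good H j v)"
    define N where "N = Suc n * Suc n + 1"
    have "\<forall>i\<in>S. \<exists>A. lineset A \<and> card A = N + Suc n \<and> (\<forall>v\<in>A. good H i v)"
    proof
      fix i assume "i \<in> S"
      then obtain A where A: "lineset A" "card A = Suc (Suc n) * Suc (Suc n) + 1" "\<forall>v\<in>A. good H i v"
        using hyp by blast
      have "N + Suc n \<le> Suc (Suc n) * Suc (Suc n) + 1" unfolding N_def by simp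
      thus "\<exists>A. lineset A \<and> card A = N + Suc n \<and> (\<forall>v\<in>A. good H i v)"
        using subset_good[OF A] by blast
    qed
    from bchoice[OF this] obtain Af where Af: "\<forall>i\<in>S. lineset (Af i) \<and> card (Af i) = N + Suc n \<and> (\<forall>v\<in>Af i. good H i v)"
      by blast
    have "S \<noteq> {}" using cS by auto
    then obtain j where j: "j \<in> S" by blast
    have cS': "card (S - {j}) = Suc n" using cS j finS by simp
    have "\<exists>v\<in>Af j. \<forall>i\<in>S - {j}. \<exists>A'. A' \<subseteq> Af i \<and> lineset A' \<and> card A' = N \<and>
             (\<forall>s\<in>A'. good (contr j v ` H) i s)"
    proof (rule step[OF HS j finS])
      show "\<forall>i\<in>S - {j}. lineset (Af i) \<and> card (Af i) = N + card (S - {j}) \<and> (\<forall>s\<in>Af i. good H i s)"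
        using Af cS' by simp
      show "lineset (Af j)" using Af j by blast
      show "card (Af j) = N + card (S - {j})" using Af j cS' by simp
      show "0 < N" unfolding N_def by simp
    qed
    then obtain v where v: "v \<in> Af j" and vA: "\<forall>i\<in>S - {j}. \<exists>A'. A' \<subseteq> Af i \<and> lineset A' \<and> card A' = N \<and>
             (\<forall>s\<in>A'. good (contr j v ` H) i s)" by blast
    have H'S: "contr j v ` H \<subseteq> tensS (S - {j})" using HS contr_tensS by blast
    have finS': "finite (S - {j})" using finS by simp
    have hyp': "\<forall>i\<in>S - {j}. \<exists>A. lineset A \<and> card A = Suc n * Suc n + 1 \<and> (\<forall>s\<in>A. good (contr j v ` H) i s)"
      using vA unfolding N_def by blast
    have "\<exists>B\<subseteq>contr j v ` H. TS.independent B \<and> card B = Suc n + 1"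
      by (rule Suc.IH[rule_format, OF finS' cS' H'S]) (use hyp' in blast)
    then obtain B' where B': "B' \<subseteq> contr j v ` H" "TS.independent B'" "card B' = Suc n + 1" by blast
    have "card B' > 0" using B'(3) by simp
    hence finB': "finite B'" by (simp add: card_gt_0_iff)
    obtain T where T: "T \<in> H" "T \<noteq> 0" "contr j v T = 0" using Af j v unfolding good_def by blast
    have i2: "TS.independent {T}" using T(2) TS.dependent_single by blast
    have s2: "{T} \<subseteq> H" using T(1) by blast
    have s3: "\<forall>x\<in>{T}. contr j v x = 0" using T(3) by blast
    have "\<exists>B\<subseteq>H. TS.independent B \<and> card B = card B' + card {T}"
      by (rule combine[OF contr_linear B'(1,2) finB' s2 i2 finite.insertI[OF finite.emptyI] s3])
    thus "\<exists>B\<subseteq>H. TS.independent B \<and> card B = Suc (Suc n) + 1" using B'(3) by simp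
  qed
qed



definition line :: "'a::field \<times> 'a \<Rightarrow> ('a \<times> 'a) set" where
  "line v = {(c * fst v, c * snd v) | c. True}"

lemma P1_line: "P1 = {L. \<exists>v. v \<noteq> (0, 0) \<and> L = line v}"
  unfolding P1_def line_def by simp

lemma mem_line: "w \<in> line v \<longleftrightarrow> (\<exists>c. w = (c * fst v, c * snd v))"
  unfolding line_def by blast

lemma self_line: "v \<in> line v"
  unfolding mem_line by (rule exI[of _ 1]) simp

lemma line_eq:
  assumes "(c::'a::field) \<noteq> 0"
  shows "line (c * a, c * b) = line (a, b)"
proof (rule set_eqI)
  fix w
  show "w \<in> line (c * a, c * b) \<longleftrightarrow> w \<in> line (a, b)"
  proof
    assume "w \<in> line (c * a, c * b)"
    then obtain d where "w = (d * (c * a), d * (c * b))" unfolding mem_line by auto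
    hence "w = ((d * c) * a, (d * c) * b)" by (simp add: mult.assoc)
    thus "w \<in> line (a, b)" unfolding mem_line by auto
  next
    assume "w \<in> line (a, b)"
    then obtain d where "w = (d * a, d * b)" unfolding mem_line by auto
    hence "w = ((d / c) * (c * a), (d / c) * (c * b))" using assms by simp
    thus "w \<in> line (c * a, c * b)" unfolding mem_line by (metis fst_conv snd_conv)
  qed
qed

lemma line_cases:
  assumes "v \<noteq> (0::'a::field, 0)"
  shows "line v = line (1, 0) \<or> (\<exists>t. line v = line (t, 1))"
proof (cases "snd v = 0")
  case True
  hence "fst v \<noteq> 0" using assms by (metis prod.collapse)
  hence "line (fst v * 1, fst v * 0) = line (1, 0)" by (rule line_eq)
  moreover have "v = (fst v * 1, fst v * 0)" using True by (simp add: prod_eq_iff)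
  ultimately show ?thesis by metis
next
  case False
  hence "line (snd v * (fst v / snd v), snd v * 1) = line (fst v / snd v, 1)" by (rule line_eq)
  moreover have "v = (snd v * (fst v / snd v), snd v * 1)" using False by (simp add: prod_eq_iff)
  ultimately show ?thesis by metis
qed

lemma P1_cases:
  assumes "L \<in> P1"
  shows "L = line (1, 0) \<or> (\<exists>t. L = line (t, 1))"
  using assms line_cases unfolding P1_line by blast

lemma line10_P1: "line (1, 0) \<in> P1" unfolding P1_line by (intro CollectI exI[of _ "(1,0)"]) simp
lemma linet1_P1: "line (t, 1) \<in> P1" unfolding P1_line by (intro CollectI exI[of _ "(t,1)"]) simp

lemma hom_homog:
  "hom_eval cs (c * x, c * y) = c ^ (length cs - 1) * hom_eval cs (x, y)"
proof -
  have "hom_eval cs (c * x, c * y) = (\<Sum>k<length cs. c ^ (length cs - 1) * (cs ! k * x ^ k * y ^ (length cs - 1 - k)))"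
  proof (unfold hom_eval_def, rule sum.cong[OF refl])
    fix k assume "k \<in> {..<length cs}"
    hence "k + (length cs - 1 - k) = length cs - 1" by simp
    hence "c ^ (length cs - 1) = c ^ k * c ^ (length cs - 1 - k)" by (metis power_add)
    thus "cs ! k * fst (c * x, c * y) ^ k * snd (c * x, c * y) ^ (length cs - 1 - k) =
          c ^ (length cs - 1) * (cs ! k * x ^ k * y ^ (length cs - 1 - k))"
      by (simp add: power_mult_distrib)
  qed
  thus ?thesis by (simp add: hom_eval_def sum_distrib_left)
qed

lemma line_zero_iff: "(\<forall>w\<in>line v. hom_eval cs w = 0) \<longleftrightarrow> hom_eval cs v = 0"
proof
  assume "\<forall>w\<in>line v. hom_eval cs w = 0" thus "hom_eval cs v = 0" using self_line by blast
next
  assume h: "hom_eval cs v = 0"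
  show "\<forall>w\<in>line v. hom_eval cs w = 0"
  proof
    fix w assume "w \<in> line v"
    then obtain c where "w = (c * fst v, c * snd v)" unfolding mem_line by auto
    thus "hom_eval cs w = 0" using hom_homog[of cs c "fst v" "snd v"] h by simp
  qed
qed

lemma line_t1_inj: "line (t, 1) = line (s, (1::'a::field)) \<Longrightarrow> t = s"
proof -
  assume "line (t, 1) = line (s, 1)"
  hence "(t, 1) \<in> line (s, 1)" using self_line by metis
  then obtain c where "(t, 1) = (c * s, c * (1::'a))" unfolding mem_line by auto
  thus "t = s" by simp
qed

lemma line10_ne: "line (1, 0) \<noteq> line (t, (1::'a::field))"
proof
  assume "line (1, 0) = line (t, 1)"
  hence "(t, 1) \<in> line (1, 0)" using self_line by metis
  then obtain c where "(t, 1) = (c * 1, c * (0::'a))" unfolding mem_line by auto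
  thus False by simp
qed



lemma hom_t1: "hom_eval cs (t, 1) = poly (\<Sum>k<length cs. monom (cs ! k) k) t"
  unfolding hom_eval_def by (simp add: poly_sum poly_monom)

lemma coeff_sum_monom_nth:
  assumes "k < length cs"
  shows "coeff (\<Sum>i<length cs. monom (cs ! i) i) k = cs ! k"
proof -
  have "coeff (\<Sum>i<length cs. monom (cs ! i) i) k = (\<Sum>i<length cs. if i = k then cs ! i else 0)"
    by (simp add: coeff_sum coeff_monom)
  also have "\<dots> = cs ! k" using assms by (simp add: sum.delta)
  finally show ?thesis .
qed

lemma zc_finite:
  assumes Z: "zariski_closed_P1 Z" and L0: "L0 \<in> P1" "L0 \<notin> Z"
  shows "finite Z"
proof -
  obtain S where ZS: "Z = {L \<in> P1. \<forall>cs\<in>S. \<forall>v\<in>L. hom_eval cs v = 0}"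
    using Z unfolding zariski_closed_P1_def by blast
  obtain cs v where cs: "cs \<in> S" "v \<in> L0" "hom_eval cs v \<noteq> 0" using L0 ZS by blast
  define p where "p = (\<Sum>k<length cs. monom (cs ! k) k)"
  have "\<exists>k<length cs. cs ! k \<noteq> 0"
  proof (rule ccontr)
    assume "\<not> ?thesis"
    hence "hom_eval cs v = 0" unfolding hom_eval_def by simp
    thus False using cs by blast
  qed
  then obtain k where k: "k < length cs" "cs ! k \<noteq> 0" by blast
  have "coeff p k \<noteq> 0" using coeff_sum_monom_nth[OF k(1)] k(2) unfolding p_def by simp
  hence p0: "p \<noteq> 0" by auto
  have sub: "Z \<subseteq> insert (line (1, 0)) ((\<lambda>t. line (t, 1)) ` {t. poly p t = 0})"
  proof
    fix L assume L: "L \<in> Z"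
    hence LP: "L \<in> P1" and LZ: "\<forall>w\<in>L. hom_eval cs w = 0" using ZS cs(1) by auto
    show "L \<in> insert (line (1, 0)) ((\<lambda>t. line (t, 1)) ` {t. poly p t = 0})"
    proof (cases "L = line (1, 0)")
      case True thus ?thesis by simp
    next
      case False
      then obtain t where t: "L = line (t, 1)" using P1_cases[OF LP] by blast
      have "hom_eval cs (t, 1) = 0" using LZ self_line t by blast
      hence "poly p t = 0" using hom_t1 unfolding p_def by metis
      thus ?thesis using t by blast
    qed
  qed
  show ?thesis
    by (rule finite_subset[OF sub]) (use poly_roots_finite[OF p0] in simp)
qed



lemma finite_zc:
  fixes F :: "('a::field \<times> 'a) set set"
  assumes finF: "finite F" and FP: "F \<subseteq> P1"
  shows "zariski_closed_P1 F"
proof -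
  define T where "T = (\<lambda>t. line (t, 1)) -` F"
  have finT: "finite T" unfolding T_def
    by (rule finite_vimageI[OF finF]) (simp add: inj_on_def line_t1_inj)
  define p :: "'a poly" where "p = (\<Prod>t\<in>T. [:-t, 1:])"
  define e :: nat where "e = (if line (1, 0) \<in> F then 1 else 0)"
  define n where "n = degree p + e"
  define cs where "cs = map (coeff p) [0..<Suc n]"
  have lcs: "length cs = Suc n" unfolding cs_def by simp
  have hom: "hom_eval cs (x, y) = (\<Sum>k<Suc n. coeff p k * x ^ k * y ^ (n - k))" for x y
    unfolding hom_eval_def lcs by (intro sum.cong) (auto simp: cs_def nth_map simp del: upt_Suc)
  have homt: "hom_eval cs (t, 1) = poly p t" for t
  proof -
    have "hom_eval cs (t, 1) = (\<Sum>k<Suc n. coeff p k * t ^ k)" by (simp add: hom)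
    also have "\<dots> = (\<Sum>k\<le>degree p. coeff p k * t ^ k)"
    proof (rule sum.mono_neutral_right)
      show "{..degree p} \<subseteq> {..<Suc n}" unfolding n_def by auto
      show "\<forall>k\<in>{..<Suc n} - {..degree p}. coeff p k * t ^ k = 0" by (auto simp: coeff_eq_0)
    qed simp
    also have "\<dots> = poly p t" by (simp add: poly_altdef)
    finally show ?thesis .
  qed
  have hom10: "hom_eval cs (1, 0) = coeff p n"
  proof -
    have "hom_eval cs (1, 0) = (\<Sum>k<Suc n. coeff p k * 0 ^ (n - k))" by (simp add: hom)
    also have "\<dots> = (\<Sum>k<n. coeff p k * 0 ^ (n - k)) + coeff p n" by simp
    also have "(\<Sum>k<n. coeff p k * 0 ^ (n - k)) = 0" by (intro sum.neutral) auto
    finally show ?thesis by simp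
  qed
  have lc: "lead_coeff p = 1" unfolding p_def by (simp add: lead_coeff_prod)
  have c10: "coeff p n = 0 \<longleftrightarrow> line (1, 0) \<in> F"
  proof (cases "line (1, 0) \<in> F")
    case True
    hence "n = degree p + 1" unfolding n_def e_def by simp
    thus ?thesis using True by (simp add: coeff_eq_0)
  next
    case False
    hence "n = degree p" unfolding n_def e_def by simp
    thus ?thesis using False lc by simp
  qed
  have pt: "poly p t = 0 \<longleftrightarrow> line (t, 1) \<in> F" for t
  proof -
    have "poly p t = (\<Prod>s\<in>T. t - s)" unfolding p_def by (simp add: poly_prod)
    hence "poly p t = 0 \<longleftrightarrow> (\<exists>s\<in>T. t - s = 0)" using finT by simp
    also have "\<dots> \<longleftrightarrow> t \<in> T" by auto
    finally show ?thesis unfolding T_def by simp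
  qed
  have eq: "F = {L \<in> P1. \<forall>c\<in>{cs}. \<forall>v\<in>L. hom_eval c v = 0}"
  proof (rule set_eqI)
    fix L
    show "L \<in> F \<longleftrightarrow> L \<in> {L \<in> P1. \<forall>c\<in>{cs}. \<forall>v\<in>L. hom_eval c v = 0}"
    proof (cases "L \<in> P1")
      case False thus ?thesis using FP by auto
    next
      case True
      show ?thesis
      proof (cases "L = line (1, 0)")
        case L: True
        have "L \<in> F \<longleftrightarrow> hom_eval cs (1, 0) = 0" using c10 hom10 L by simp
        also have "\<dots> \<longleftrightarrow> (\<forall>v\<in>L. hom_eval cs v = 0)" using line_zero_iff L by metis
        finally show ?thesis using True by simp
      next
        case False
        then obtain t where L: "L = line (t, 1)" using P1_cases[OF True] by blast
        have "L \<in> F \<longleftrightarrow> hom_eval cs (t, 1) = 0" using pt homt L by simp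
        also have "\<dots> \<longleftrightarrow> (\<forall>v\<in>L. hom_eval cs v = 0)" using line_zero_iff L by metis
        finally show ?thesis using True by simp
      qed
    qed
  qed
  show ?thesis unfolding zariski_closed_P1_def using FP eq by blast
qed

lemma P1_infinite: "infinite (P1 :: ('a::{field, semiring_char_0} \<times> 'a) set set)"
proof
  assume fin: "finite (P1 :: ('a \<times> 'a) set set)"
  have "range (\<lambda>t::'a. line (t, 1)) \<subseteq> P1" using linet1_P1 by blast
  hence "finite (range (\<lambda>t::'a. line (t, 1)))" using fin finite_subset by blast
  moreover have "inj (\<lambda>t::'a. line (t, 1))" by (simp add: inj_on_def line_t1_inj)
  ultimately have "finite (UNIV :: 'a set)" using finite_imageD by blast
  thus False using infinite_UNIV_char_0 by blast
qed



lemma idx_eq: "idx m = idxS {..<m}"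
  unfolding idx_def idxS_def by auto

lemma tensors_eq: "tensors m = tensS {..<m}"
  unfolding tensors_def tensS_def idx_eq ..

lemma comp2_0[simp]: "comp2 p 0 = fst p" and comp2_1[simp]: "comp2 p (Suc 0) = snd p"
  by (simp_all add: comp2_def)

lemma pure_contr:
  assumes j: "j < m" and a: "fst (\<alpha> j) * fst v + snd (\<alpha> j) * snd v = 0"
  shows "contr j v (pure m \<alpha>) = 0"
proof
  fix f :: "nat \<Rightarrow> nat"
  show "contr j v (pure m \<alpha>) f = 0 f"
  proof (cases "f j = 0")
    case False thus ?thesis by (simp add: contr_def)
  next
    case True
    have iff: "f(j:=0) \<in> idx m \<longleftrightarrow> f(j:=Suc 0) \<in> idx m"
      using j unfolding idx_def by auto
    show ?thesis
    proof (cases "f(j:=0) \<in> idx m")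
      case False thus ?thesis using iff True by (simp add: contr_def pure_def)
    next
      case in0: True
      hence in1: "f(j:=Suc 0) \<in> idx m" using iff by simp
      define R where "R = (\<Prod>i\<in>{..<m} - {j}. comp2 (\<alpha> i) (f i))"
      have pk: "(\<Prod>i<m. comp2 (\<alpha> i) ((f(j:=k)) i)) = comp2 (\<alpha> j) k * R" for k
      proof -
        have "(\<Prod>i<m. comp2 (\<alpha> i) ((f(j:=k)) i)) = comp2 (\<alpha> j) ((f(j:=k)) j) * (\<Prod>i\<in>{..<m} - {j}. comp2 (\<alpha> i) ((f(j:=k)) i))"
          using j by (intro prod.remove) auto
        also have "(\<Prod>i\<in>{..<m} - {j}. comp2 (\<alpha> i) ((f(j:=k)) i)) = R"
          unfolding R_def by (intro prod.cong) auto
        finally show ?thesis by simp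
      qed
      have "contr j v (pure m \<alpha>) f = fst v * (fst (\<alpha> j) * R) + snd v * (snd (\<alpha> j) * R)"
        using True in0 in1 pk[of 0] pk[of "Suc 0"] by (simp add: contr_def pure_def)
      also have "\<dots> = (fst (\<alpha> j) * fst v + snd (\<alpha> j) * snd v) * R" by (simp add: algebra_simps)
      finally show ?thesis using a by simp
    qed
  qed
qed

lemma Sigma0_ker:
  assumes j: "j < m" and v: "v \<in> L"
  shows "Sigma0 m j L \<subseteq> {T. contr j v T = 0}"
  unfolding Sigma0_def
proof (rule TS.span_minimal)
  interpret lf: Vector_Spaces.linear tscale tscale "contr j v" by (rule contr_linear)
  show "TS.subspace {T. contr j v T = 0}" by (rule lf.subspace_kernel)
  show "{pure m \<alpha> |\<alpha>. \<alpha> j \<in> annih L} \<subseteq> {T. contr j v T = 0}"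
  proof
    fix T assume "T \<in> {pure m \<alpha> |\<alpha>. \<alpha> j \<in> annih L}"
    then obtain \<alpha> where T: "T = pure m \<alpha>" and a: "\<alpha> j \<in> annih L" by blast
    have "fst (\<alpha> j) * fst v + snd (\<alpha> j) * snd v = 0" using a v unfolding annih_def by blast
    thus "T \<in> {T. contr j v T = 0}" using pure_contr[OF j] T by blast
  qed
qed

lemma dim_ge1:
  assumes "1 \<le> TS.dim (V :: ('b \<Rightarrow> 'a::field) set)"
  shows "\<exists>T\<in>V. T \<noteq> 0"
proof (rule ccontr)
  assume "\<not> ?thesis"
  hence "V \<subseteq> TS.span {}" by auto
  hence "TS.dim V \<le> card ({} :: ('b \<Rightarrow> 'a) set)" by (rule TS.dim_le_card) simp
  thus False using assms by simp
qed

lemma dim_ge2: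
  assumes "2 \<le> TS.dim (V :: ('b \<Rightarrow> 'a::field) set)"
  shows "\<exists>K\<subseteq>V. TS.independent K \<and> finite K \<and> card K = 2"
proof -
  obtain B where B: "B \<subseteq> V" "TS.independent B" "card B = TS.dim V" by (rule TS.basis_exists) blast
  hence "2 \<le> card B" using assms by simp
  then obtain K where K: "K \<subseteq> B" "card K = 2" "finite K" by (rule obtain_subset_with_card_n)
  have "TS.independent K" by (rule TS.independent_mono[OF B(2) K(1)])
  thus ?thesis using K B(1) by blast
qed

lemma line_of_mem:
  assumes "L \<in> P1" "v \<in> L" "v \<noteq> (0, 0)"
  shows "L = line v"
proof -
  obtain u where u: "L = line u" using assms(1) unfolding P1_line by blast
  have "v \<in> line u" using u assms(2) by simp
  then obtain c where c: "v = (c * fst u, c * snd u)" unfolding mem_line by blast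
  hence "c \<noteq> 0" using assms(3) by auto
  hence "line (c * fst u, c * snd u) = line (fst u, snd u)" by (rule line_eq)
  thus ?thesis using u c by simp
qed

lemma notindep_line:
  fixes v1 v2 :: "'a::field \<times> 'a"
  assumes "v1 \<noteq> (0, 0)" "v2 \<noteq> (0, 0)" "\<not> indep2 v1 v2"
  shows "line v2 = line v1"
proof -
  have eq: "fst v1 * snd v2 = snd v1 * fst v2" using assms(3) unfolding indep2_def by simp
  obtain d where d: "v2 = (d * fst v1, d * snd v1)"
  proof (cases "fst v1 = 0")
    case True
    hence s1: "snd v1 \<noteq> 0" using assms(1) by (metis prod.collapse)
    hence "fst v2 = 0" using eq True by simp
    hence "v2 = ((snd v2 / snd v1) * fst v1, (snd v2 / snd v1) * snd v1)" using True s1 by (simp add: prod_eq_iff)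
    thus ?thesis using that by blast
  next
    case False
    have "snd v2 = (fst v2 / fst v1) * snd v1" using eq False by (simp add: field_simps)
    hence "v2 = ((fst v2 / fst v1) * fst v1, (fst v2 / fst v1) * snd v1)" using False by (simp add: prod_eq_iff)
    thus ?thesis using that by blast
  qed
  hence "d \<noteq> 0" using assms(2) by auto
  hence "line (d * fst v1, d * snd v1) = line (fst v1, snd v1)" by (rule line_eq)
  thus ?thesis using d by simp
qed

lemma distinct_lines_indep:
  assumes "L1 \<in> P1" "L2 \<in> P1" "v1 \<in> L1" "v2 \<in> L2" "v1 \<noteq> (0, 0)" "v2 \<noteq> (0, 0)" "L1 \<noteq> L2"
  shows "indep2 v1 v2"
proof (rule ccontr)
  assume "\<not> indep2 v1 v2"
  hence "line v2 = line v1" using notindep_line assms(5,6) by blast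
  thus False using line_of_mem[OF assms(1,3,5)] line_of_mem[OF assms(2,4,6)] assms(7) by simp
qed

lemma hspace_bound:
  assumes lin: "inj_lin_map m \<phi>" and B: "TS.independent B" "B \<subseteq> \<phi> ` hspace m"
  shows "finite B \<and> card B \<le> Suc m"
proof -
  define e where "e k = (\<lambda>i::nat. if i = k then 1 else (0::'a))" for k :: nat
  define E where "E = \<phi> ` (e ` {..m})"
  have add: "\<And>x y. x \<in> hspace m \<Longrightarrow> y \<in> hspace m \<Longrightarrow> \<phi> (x + y) = \<phi> x + \<phi> y"
    and scl: "\<And>c x. x \<in> hspace m \<Longrightarrow> \<phi> (tscale c x) = tscale c (\<phi> x)"
    using lin unfolding inj_lin_map_def by auto
  have z: "(0 :: nat \<Rightarrow> 'a) \<in> hspace m" by (simp add: hspace_def)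
  have phi0: "\<phi> 0 = 0"
  proof -
    have a: "\<phi> (tscale 0 0) = tscale 0 (\<phi> 0)" by (rule scl[OF z])
    have t0: "tscale 0 (0 :: nat \<Rightarrow> 'a) = 0" by (simp add: tscale_def fun_eq_iff)
    have t1: "tscale 0 (\<phi> 0) = 0" by (simp add: tscale_def fun_eq_iff)
    show ?thesis using a by (simp only: t0 t1)
  qed
  have sub: "\<phi> ` hspace m \<subseteq> TS.span E"
  proof
    fix y assume "y \<in> \<phi> ` hspace m"
    then obtain x where x: "x \<in> hspace m" "y = \<phi> x" by blast
    define p where "p n = (\<lambda>i. if i < n then x i else 0)" for n
    have ph: "p n \<in> hspace m" for n using x(1) unfolding p_def hspace_def by auto
    have eh: "k \<le> m \<Longrightarrow> e k \<in> hspace m" for k unfolding e_def hspace_def by auto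
    have sh: "k \<le> m \<Longrightarrow> tscale c (e k) \<in> hspace m" for k c
      using eh unfolding hspace_def tscale_def by auto
    have pS: "p (Suc n) = p n + tscale (x n) (e n)" for n
    proof (rule ext)
      fix i show "p (Suc n) i = (p n + tscale (x n) (e n)) i"
        unfolding p_def e_def tscale_def by (cases "i = n") auto
    qed
    have "n \<le> Suc m \<Longrightarrow> \<phi> (p n) \<in> TS.span E" for n
    proof (induction n)
      case 0
      have p0: "p 0 = 0" unfolding p_def by (simp add: fun_eq_iff)
      show ?case unfolding p0 phi0 by (rule TS.span_zero)
    next
      case (Suc n)
      hence nm: "n \<le> m" by simp
      have "\<phi> (p (Suc n)) = \<phi> (p n) + tscale (x n) (\<phi> (e n))"
        unfolding pS using add[OF ph sh[OF nm]] scl[OF eh[OF nm]] by simp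
      moreover have "\<phi> (e n) \<in> E" using nm unfolding E_def by blast
      moreover have "\<phi> (p n) \<in> TS.span E" using Suc.IH Suc.prems by simp
      ultimately show ?case using TS.span_add[OF _ TS.span_scale[OF TS.span_base]] by metis
    qed
    moreover have "p (Suc m) = x" using x(1) unfolding p_def hspace_def by (auto simp: fun_eq_iff)
    ultimately show "y \<in> TS.span E" using x(2) by (metis le_refl)
  qed
  have finE: "finite E" unfolding E_def by simp
  have cE: "card E \<le> Suc m" unfolding E_def
  proof -
    have "card (\<phi> ` (e ` {..m})) \<le> card (e ` {..m})" by (rule card_image_le) simp
    also have "\<dots> \<le> card {..m}" by (rule card_image_le) simp
    finally show "card (\<phi> ` (e ` {..m})) \<le> Suc m" by simp
  qed
  have "B \<subseteq> TS.span E" using B(2) sub by (rule subset_trans)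
  hence "finite B \<and> card B \<le> card E" using TS.independent_span_bound[OF finE B(1)] by blast
  thus ?thesis using cE by linarith
qed



definition rep :: "('a::field \<times> 'a) set \<Rightarrow> 'a \<times> 'a" where
  "rep L = (SOME v. v \<in> L \<and> v \<noteq> (0, 0))"

lemma rep_prop:
  assumes "L \<in> P1" shows "rep L \<in> L" "rep L \<noteq> (0, 0)"
proof -
  obtain v where v: "v \<noteq> (0, 0)" "L = line v" using assms unfolding P1_line by blast
  hence "\<exists>v. v \<in> L \<and> v \<noteq> (0, 0)" using self_line by blast
  hence "rep L \<in> L \<and> rep L \<noteq> (0, 0)" unfolding rep_def by (rule someI_ex)
  thus "rep L \<in> L" "rep L \<noteq> (0, 0)" by auto
qed

lemma pick_lines:
  assumes W: "W \<subseteq> (P1 :: ('a::field \<times> 'a) set set)" "infinite W"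
  shows "\<exists>W0\<subseteq>W. lineset (rep ` W0) \<and> card (rep ` W0) = M"
proof -
  obtain W0 where W0: "W0 \<subseteq> W" "finite W0" "card W0 = M"
    using infinite_arbitrarily_large[OF W(2)] by blast
  have inj: "inj_on rep W0"
  proof (rule inj_onI)
    fix L1 L2 assume L: "L1 \<in> W0" "L2 \<in> W0" "rep L1 = rep L2"
    have P: "L1 \<in> P1" "L2 \<in> P1" using L W0 W by auto
    have "L1 = line (rep L1)" by (rule line_of_mem[OF P(1) rep_prop[OF P(1)]])
    also have "\<dots> = line (rep L2)" using L(3) by (rule arg_cong)
    also have "\<dots> = L2" by (rule line_of_mem[OF P(2) rep_prop[OF P(2)], symmetric])
    finally show "L1 = L2" .
  qed
  have "lineset (rep ` W0)" unfolding lineset_def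
  proof (intro ballI impI)
    fix v w assume "v \<in> rep ` W0" "w \<in> rep ` W0" "v \<noteq> w"
    then obtain L1 L2 where L: "L1 \<in> W0" "L2 \<in> W0" "v = rep L1" "w = rep L2" by blast
    have P: "L1 \<in> P1" "L2 \<in> P1" using L W0 W by auto
    have "L1 \<noteq> L2" using L \<open>v \<noteq> w\<close> by blast
    thus "indep2 v w" using distinct_lines_indep[OF P rep_prop(1)[OF P(1)] rep_prop(1)[OF P(2)]
        rep_prop(2)[OF P(1)] rep_prop(2)[OF P(2)]] L by simp
  qed
  moreover have "card (rep ` W0) = M" using card_image[OF inj] W0 by simp
  ultimately show ?thesis using W0(1) by blast
qed

theorem theorem2p21:
  fixes m :: nat and \<phi> :: "(nat \<Rightarrow> 'a::real_normed_field) \<Rightarrow> (nat \<Rightarrow> nat) \<Rightarrow> 'a"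
  assumes "m \<ge> 2"
    and "weak_factorization_structure m \<phi>"
  shows "factorization_structure m \<phi>"
proof -
  have m2: "m \<ge> 2" by fact
  have lin: "inj_lin_map m \<phi>" using assms(2) unfolding weak_factorization_structure_def by blast
  have weak: "\<forall>j<m. generic (\<lambda>L. 1 \<le> TS.dim (\<phi> ` hspace m \<inter> Sigma0 m j L))"
    using assms(2) unfolding weak_factorization_structure_def by blast
  define H where "H = \<phi> ` hspace m"
  have HS: "H \<subseteq> tensS {..<m}"
  proof
    fix T assume "T \<in> H"
    then obtain x where x: "x \<in> hspace m" "T = \<phi> x" unfolding H_def by blast
    have "\<forall>x\<in>hspace m. \<phi> x \<in> tensors m" using lin unfolding inj_lin_map_def by (rule conjunct1)
    hence "\<phi> x \<in> tensors m" using x(1) by (rule bspec)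
    hence "\<phi> x \<in> tensS {..<m}" unfolding tensors_eq .
    thus "T \<in> tensS {..<m}" using x(2) by simp
  qed
  have bound: "card B \<le> Suc m" if "TS.independent B" "B \<subseteq> H" for B
  proof -
    have "B \<subseteq> \<phi> ` hspace m" using that(2) unfolding H_def .
    from hspace_bound[OF lin that(1) this] show ?thesis by (rule conjunct2)
  qed
  have "\<exists>U. U \<subseteq> P1 \<and> U \<noteq> {} \<and> zariski_closed_P1 (P1 - U) \<and>
          (\<forall>L\<in>U. 1 \<le> TS.dim (H \<inter> Sigma0 m j L))" if "j \<in> {..<m}" for j
  proof -
    have "j < m" using that by simp
    hence "generic (\<lambda>L. 1 \<le> TS.dim (\<phi> ` hspace m \<inter> Sigma0 m j L))" using weak by blast
    thus ?thesis unfolding generic_def H_def .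
  qed
  hence "\<forall>j\<in>{..<m}. \<exists>U. U \<subseteq> P1 \<and> U \<noteq> {} \<and> zariski_closed_P1 (P1 - U) \<and>
          (\<forall>L\<in>U. 1 \<le> TS.dim (H \<inter> Sigma0 m j L))" by blast
  from bchoice[OF this] obtain U where U0: "\<forall>j\<in>{..<m}. U j \<subseteq> P1 \<and> U j \<noteq> {} \<and> zariski_closed_P1 (P1 - U j) \<and>
          (\<forall>L\<in>U j. 1 \<le> TS.dim (H \<inter> Sigma0 m j L))" by blast
  have UP: "U j \<subseteq> P1" and Une: "U j \<noteq> {}" and Uc: "zariski_closed_P1 (P1 - U j)"
    and Ud: "\<forall>L\<in>U j. 1 \<le> TS.dim (H \<inter> Sigma0 m j L)" if "j < m" for j
    using U0 that by auto
  have finZ: "finite (P1 - U j)" if jm: "j < m" for j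
  proof -
    obtain L0 where L0: "L0 \<in> U j" using Une[OF jm] by blast
    hence "L0 \<in> P1" "L0 \<notin> P1 - U j" using UP[OF jm] by auto
    thus ?thesis by (rule zc_finite[OF Uc[OF jm]])
  qed
  have infU: "infinite (U j)" if jm: "j < m" for j
  proof
    assume "finite (U j)"
    hence "finite ((P1 - U j) \<union> U j)" using finZ[OF jm] by simp
    moreover have "(P1 - U j) \<union> U j = (P1 :: ('a \<times> 'a) set set)" using UP[OF jm] by blast
    ultimately have "finite (P1 :: ('a \<times> 'a) set set)" by simp
    thus False using P1_infinite by blast
  qed
  have goodU: "good H j (rep L)" if "j < m" "L \<in> U j" for j L
  proof -
    have LP: "L \<in> P1" using UP[OF that(1)] that(2) by blast
    have "1 \<le> TS.dim (H \<inter> Sigma0 m j L)" using Ud[OF that(1)] that(2) by blast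
    then obtain T where T: "T \<in> H \<inter> Sigma0 m j L" "T \<noteq> 0" using dim_ge1 by blast
    have "contr j (rep L) T = 0" using Sigma0_ker[OF that(1) rep_prop(1)[OF LP]] T(1) by blast
    thus ?thesis unfolding good_def using T by blast
  qed
  have pickA: "\<exists>A. lineset A \<and> card A = M \<and> (\<forall>v\<in>A. good H j v)" if jm: "j < m" for j M
  proof -
    obtain W0 where W0: "W0 \<subseteq> U j" "lineset (rep ` W0)" "card (rep ` W0) = M"
      using pick_lines[OF UP[OF jm] infU[OF jm]] by blast
    have "\<forall>v\<in>rep ` W0. good H j v" using goodU[OF jm] W0(1) by blast
    thus ?thesis using W0 by blast
  qed
  have "generic (\<lambda>L. TS.dim (H \<inter> Sigma0 m j L) = 1)" if j: "j < m" for j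
  proof -
    define Bad where "Bad = {L \<in> U j. 2 \<le> TS.dim (H \<inter> Sigma0 m j L)}"
    define S' where "S' = {..<m} - {j}"
    define n where "n = m - 2"
    have cS': "card S' = Suc n" unfolding S'_def n_def using j m2 by simp
    define N where "N = Suc n * Suc n + 1"
    have finBad: "finite Bad"
    proof (rule ccontr)
      assume inf: "infinite Bad"
      have "Bad \<subseteq> P1" using UP[OF j] unfolding Bad_def by blast
      then obtain W0 where W0: "W0 \<subseteq> Bad" "lineset (rep ` W0)" "card (rep ` W0) = N + card S'"
        using pick_lines[OF _ inf] by blast
      have "\<forall>i\<in>S'. \<exists>A. lineset A \<and> card A = N + card S' \<and> (\<forall>s\<in>A. good H i s)"
        using pickA unfolding S'_def by blast
      from bchoice[OF this] obtain A where A: "\<forall>i\<in>S'. lineset (A i) \<and> card (A i) = N + card S' \<and> (\<forall>s\<in>A i. good H i s)"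
        by blast
      have "\<exists>v\<in>rep ` W0. \<forall>i\<in>{..<m} - {j}. \<exists>A'. A' \<subseteq> A i \<and> lineset A' \<and> card A' = N \<and>
             (\<forall>s\<in>A'. good (contr j v ` H) i s)"
      proof (rule step[OF HS _ finite_lessThan])
        show "j \<in> {..<m}" using j by simp
        show "\<forall>i\<in>{..<m} - {j}. lineset (A i) \<and> card (A i) = N + card ({..<m} - {j}) \<and> (\<forall>s\<in>A i. good H i s)"
          using A unfolding S'_def by blast
        show "lineset (rep ` W0)" by (rule W0(2))
        show "card (rep ` W0) = N + card ({..<m} - {j})" using W0(3) unfolding S'_def by simp
        show "0 < N" unfolding N_def by simp
      qed
      then obtain v where v: "v \<in> rep ` W0" and vA: "\<forall>i\<in>S'. \<exists>A'. A' \<subseteq> A i \<and> lineset A' \<and> card A' = N \<and>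
             (\<forall>s\<in>A'. good (contr j v ` H) i s)" unfolding S'_def by blast
      have H'S: "contr j v ` H \<subseteq> tensS S'" using HS contr_tensS unfolding S'_def by blast
      have finS': "finite S'" unfolding S'_def by simp
      have hyp': "\<forall>i\<in>S'. \<exists>A. lineset A \<and> card A = Suc n * Suc n + 1 \<and> (\<forall>s\<in>A. good (contr j v ` H) i s)"
        using vA unfolding N_def by blast
      have "\<exists>B\<subseteq>contr j v ` H. TS.independent B \<and> card B = Suc n + 1"
        by (rule key[rule_format, OF finS' cS' H'S]) (use hyp' in blast)
      then obtain B' where B': "B' \<subseteq> contr j v ` H" "TS.independent B'" "card B' = Suc n + 1" by blast
      have "card B' > 0" using B'(3) by simp
      hence finB': "finite B'" by (simp add: card_gt_0_iff)
      obtain L where L: "L \<in> W0" "v = rep L" using v by blast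
      have LB: "L \<in> Bad" using L W0 by blast
      hence LP: "L \<in> P1" using UP[OF j] unfolding Bad_def by blast
      have "2 \<le> TS.dim (H \<inter> Sigma0 m j L)" using LB unfolding Bad_def by blast
      then obtain K where K: "K \<subseteq> H \<inter> Sigma0 m j L" "TS.independent K" "finite K" "card K = 2"
        using dim_ge2 by blast
      have K1: "K \<subseteq> H" using K(1) by blast
      have K4: "\<forall>x\<in>K. contr j v x = 0"
        using K(1) Sigma0_ker[OF j rep_prop(1)[OF LP]] L(2) by blast
      have "\<exists>B\<subseteq>H. TS.independent B \<and> card B = card B' + card K"
        by (rule combine[OF contr_linear B'(1,2) finB' K1 K(2,3) K4])
      then obtain B where B: "B \<subseteq> H" "TS.independent B" "card B = card B' + card K" by blast
      have "card B = m + 2" using B(3) B'(3) K(4) unfolding n_def using m2 by simp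
      moreover have "card B \<le> Suc m" using bound B(2,1) by blast
      ultimately show False by simp
    qed
    define U' where "U' = U j - Bad"
    have U'P: "U' \<subseteq> P1" using UP[OF j] unfolding U'_def by blast
    have "infinite U'" unfolding U'_def by (rule Diff_infinite_finite[OF finBad infU[OF j]])
    hence U'ne: "U' \<noteq> {}" by auto
    have eqc: "P1 - U' = (P1 - U j) \<union> Bad" using UP[OF j] unfolding U'_def Bad_def by blast
    have "zariski_closed_P1 (P1 - U')"
    proof (unfold eqc, rule finite_zc)
      show "finite ((P1 - U j) \<union> Bad)" using finZ[OF j] finBad by simp
      show "(P1 - U j) \<union> Bad \<subseteq> P1" using UP[OF j] unfolding Bad_def by blast
    qed
    moreover have "\<forall>L\<in>U'. TS.dim (H \<inter> Sigma0 m j L) = 1"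
    proof
      fix L assume "L \<in> U'"
      hence "L \<in> U j" "L \<notin> Bad" unfolding U'_def by auto
      hence "1 \<le> TS.dim (H \<inter> Sigma0 m j L)" "\<not> 2 \<le> TS.dim (H \<inter> Sigma0 m j L)"
        using Ud[OF j] unfolding Bad_def by auto
      thus "TS.dim (H \<inter> Sigma0 m j L) = 1" by simp
    qed
    ultimately show ?thesis unfolding generic_def using U'P U'ne by blast
  qed
  thus ?thesis unfolding factorization_structure_def H_def using lin by blast
qed


end
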